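(* Let $k$ be a field of characteristic $0$ or greater than $d$, $d\ge3$, and $(V,\Theta)$ a regular $d$-linear space over $k$ with center $\mathrm{Cent}_k(\Theta)$ and Lie algebra $\mathcal{L}_\Theta$. Let $\psi\in\mathrm{Cent}_k(\Theta)$. Then $[f,g]_\psi:=f\psi g-g\psi f$ defines a Lie algebra structure on the vector space $\mathcal{L}_\Theta$ (in particular $[f,g]_\psi\in\mathcal{L}_\Theta$ for all $f,g\in\mathcal{L}_\Theta$).
   Context: $(V,\Theta)$: $V$ finite-dimensional $k$-space, $\Theta:V^d\to k$ symmetric $d$-linear, regular meaning $\Theta(w,u_2,\dots,u_d)=0\ \forall u_i\Rightarrow w=0$. $\mathrm{Cent}_k(\Theta)=\{f\in\mathrm{End}_k(V):\Theta(fu_1,u_2,\dots,u_d)=\Theta(u_1,fu_2,\dots,u_d)\ \forall u_i\}$. $\mathcal{L}_\Theta=\{L\in\mathfrak{gl}(V):\sum_{i=1}^d\Theta(u_1,\dots,L(u_i),\dots,u_d)=0\ \forall u_i\}$. *)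

theory Defs
  imports Complex_Main "HOL-Combinatorics.Permutations"
begin

text \<open>A d-linear form on V is modelled as a function Theta :: (nat => 'v) => 'a
  taking a d-tuple (u 0, ..., u (d-1)) encoded as a function on indices;
  only the entries with index < d matter.\<close>

definition dlinear_form ::
  "('a::field \<Rightarrow> 'v::ab_group_add \<Rightarrow> 'v) \<Rightarrow> nat \<Rightarrow> ((nat \<Rightarrow> 'v) \<Rightarrow> 'a) \<Rightarrow> bool" where
  "dlinear_form scale d Theta \<longleftrightarrow>
     (\<forall>u u'. (\<forall>i<d. u i = u' i) \<longrightarrow> Theta u = Theta u') \<and>
     (\<forall>u i. i < d \<longrightarrow>
        (\<forall>x y. Theta (u(i := x + y)) = Theta (u(i := x)) + Theta (u(i := y))) \<and>
        (\<forall>c x. Theta (u(i := scale c x)) = c * Theta (u(i := x))))"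

definition symmetric_form :: "nat \<Rightarrow> ((nat \<Rightarrow> 'v) \<Rightarrow> 'a) \<Rightarrow> bool" where
  "symmetric_form d Theta \<longleftrightarrow> (\<forall>u p. p permutes {..<d} \<longrightarrow> Theta (u \<circ> p) = Theta u)"

definition regular_form :: "((nat \<Rightarrow> 'v::zero) \<Rightarrow> 'a::zero) \<Rightarrow> bool" where
  "regular_form Theta \<longleftrightarrow> (\<forall>w. (\<forall>u. Theta (u(0 := w)) = 0) \<longrightarrow> w = 0)"

definition Cent ::
  "('a::field \<Rightarrow> 'v::ab_group_add \<Rightarrow> 'v) \<Rightarrow> ((nat \<Rightarrow> 'v) \<Rightarrow> 'a) \<Rightarrow> ('v \<Rightarrow> 'v) set" where
  "Cent scale Theta = {f. Vector_Spaces.linear scale scale f \<and>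
     (\<forall>u. Theta (u(0 := f (u 0))) = Theta (u(1 := f (u 1))))}"

definition LieAlg ::
  "('a::field \<Rightarrow> 'v::ab_group_add \<Rightarrow> 'v) \<Rightarrow> nat \<Rightarrow> ((nat \<Rightarrow> 'v) \<Rightarrow> 'a) \<Rightarrow> ('v \<Rightarrow> 'v) set" where
  "LieAlg scale d Theta = {L. Vector_Spaces.linear scale scale L \<and>
     (\<forall>u. (\<Sum>i<d. Theta (u(i := L (u i)))) = 0)}"

definition psi_bracket :: "('v::ab_group_add \<Rightarrow> 'v) \<Rightarrow> ('v \<Rightarrow> 'v) \<Rightarrow> ('v \<Rightarrow> 'v) \<Rightarrow> 'v \<Rightarrow> 'v" where
  "psi_bracket psi f g = (\<lambda>x. f (psi (g x)) - g (psi (f x)))"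

definition end_add :: "('v::ab_group_add \<Rightarrow> 'v) \<Rightarrow> ('v \<Rightarrow> 'v) \<Rightarrow> 'v \<Rightarrow> 'v" where
  "end_add f g = (\<lambda>x. f x + g x)"

definition end_scale :: "('a \<Rightarrow> 'v \<Rightarrow> 'v) \<Rightarrow> 'a \<Rightarrow> ('v \<Rightarrow> 'v) \<Rightarrow> 'v \<Rightarrow> 'v" where
  "end_scale scale c f = (\<lambda>x. scale c (f x))"

end

theory Submission
  imports Defs
begin

lemma add_diff_hom:
  fixes f :: "'v::ab_group_add \<Rightarrow> 'w::ab_group_add"
  assumes "\<And>x y. f (x+y) = f x + f y"
  shows "f (a - b) = f a - f b"
  by (metis assms add_diff_cancel diff_add_cancel)

lemma theta_diff:
  assumes "dlinear_form scale d Theta" "i < d"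
  shows "Theta (u(i := a - b)) = Theta (u(i := a)) - Theta (u(i := b))"
proof -
  have "Theta (u(i := (a - b) + b)) = Theta (u(i := a - b)) + Theta (u(i := b))"
    using assms unfolding dlinear_form_def by blast
  then show ?thesis by simp
qed

lemma cent_gen:
  fixes Theta :: "(nat \<Rightarrow> 'v) \<Rightarrow> 'a"
  assumes sym: "symmetric_form d Theta"
    and c: "\<And>u. Theta (u(0 := psi (u 0))) = Theta (u(1 := psi (u 1)))"
    and ij: "i < d" "j < d" "i \<noteq> j"
  shows "Theta (u(i := psi (u i))) = Theta (u(j := psi (u j)))"
proof -
  define s where "s = transpose 0 i"
  define j' where "j' = s j"
  define p where "p = s \<circ> transpose 1 j'"
  have j'0: "j' \<noteq> 0" unfolding j'_def s_def using ij by (auto simp: transpose_def)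
  have d0: "0 < d" using ij by auto
  have j'd: "j' < d" unfolding j'_def s_def using ij d0 by (auto simp: transpose_def)
  have d1: "1 < d" using ij by auto
  have pp: "p permutes {..<d}" unfolding p_def s_def
    by (intro permutes_compose permutes_swap_id) (use ij d0 d1 j'd in auto)
  have p0: "p 0 = i" unfolding p_def using j'0 by (auto simp: s_def transpose_def)
  have p1: "p 1 = j" unfolding p_def j'_def s_def by (auto simp: transpose_def)
  have inj: "inj p" using pp permutes_inj by blast
  have e1: "(u \<circ> p)(0 := psi ((u \<circ> p) 0)) = (u(i := psi (u i))) \<circ> p"
    using p0 inj by (auto simp: fun_eq_iff inj_eq)
  have e2: "(u \<circ> p)(1 := psi ((u \<circ> p) 1)) = (u(j := psi (u j))) \<circ> p"
    using p1 inj by (auto simp: fun_eq_iff) (metis inj injD)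
  have "Theta (u(i := psi (u i))) = Theta ((u(i := psi (u i))) \<circ> p)"
    using sym pp unfolding symmetric_form_def by metis
  also have "\<dots> = Theta ((u(j := psi (u j))) \<circ> p)" using c[of "u \<circ> p"] e1 e2 by simp
  also have "\<dots> = Theta (u(j := psi (u j)))"
    using sym pp unfolding symmetric_form_def by metis
  finally show ?thesis .
qed


lemma L1:
  fixes Theta :: "(nat \<Rightarrow> 'v::ab_group_add) \<Rightarrow> 'a::field"
  assumes f: "\<And>u. (\<Sum>i<d. Theta (u(i := f (u i)))) = 0" and i: "i < d"
  shows "Theta (u(i := f y)) = - (\<Sum>j\<in>{j. j \<in> {..<d} \<and> i \<noteq> j}. Theta (u(i := y, j := f (u j))))"
proof -
  define w where "w = u(i := y)"
  have "0 = (\<Sum>j<d. Theta (w(j := f (w j))))" using f by simp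
  also have "\<dots> = Theta (w(i := f (w i))) + (\<Sum>j\<in>{..<d} - {i}. Theta (w(j := f (w j))))"
    using i by (simp add: sum.remove)
  also have "{..<d} - {i} = {j. j \<in> {..<d} \<and> i \<noteq> j}" by auto
  also have "(\<Sum>j\<in>{j. j \<in> {..<d} \<and> i \<noteq> j}. Theta (w(j := f (w j))))
      = (\<Sum>j\<in>{j. j \<in> {..<d} \<and> i \<noteq> j}. Theta (u(i := y, j := f (u j))))"
    by (rule sum.cong) (auto simp: w_def)
  also have "w(i := f (w i)) = u(i := f y)" by (simp add: w_def)
  finally show ?thesis by (metis eq_neg_iff_add_eq_0)
qed

lemma closure:
  fixes Theta :: "(nat \<Rightarrow> 'v::ab_group_add) \<Rightarrow> 'a::field"
  assumes mult: "dlinear_form scale d Theta"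
    and sym: "symmetric_form d Theta"
    and c: "\<And>u. Theta (u(0 := psi (u 0))) = Theta (u(1 := psi (u 1)))"
    and f: "\<And>u. (\<Sum>i<d. Theta (u(i := f (u i)))) = 0"
    and g: "\<And>u. (\<Sum>i<d. Theta (u(i := g (u i)))) = 0"
  shows "(\<Sum>i<d. Theta (u(i := psi_bracket psi f g (u i)))) = 0"
proof -
  have cp: "Theta (u(i := psi x, j := y)) = Theta (u(i := x, j := psi y))"
    if "i < d" "j < d" "i \<noteq> j" for i j x y u
  proof -
    define u' where "u' = u(i := x, j := y)"
    have "Theta (u'(i := psi (u' i))) = Theta (u'(j := psi (u' j)))"
      by (rule cent_gen[OF sym c that])
    then show ?thesis using that unfolding u'_def by (simp add: fun_upd_twist)
  qed
  have "(\<Sum>i<d. Theta (u(i := psi_bracket psi f g (u i))))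
     = (\<Sum>i<d. Theta (u(i := f (psi (g (u i)))))) - (\<Sum>i<d. Theta (u(i := g (psi (f (u i))))))"
    unfolding psi_bracket_def sum_subtractf[symmetric]
    by (rule sum.cong) (auto intro: theta_diff[OF mult])
  also have "(\<Sum>i<d. Theta (u(i := f (psi (g (u i))))))
      = (\<Sum>i<d. - (\<Sum>j\<in>{j. j \<in> {..<d} \<and> i \<noteq> j}. Theta (u(i := psi (g (u i)), j := f (u j)))))"
    by (rule sum.cong[OF refl], rule L1[OF f]) simp
  also have "\<dots> = - (\<Sum>i<d. \<Sum>j\<in>{j. j \<in> {..<d} \<and> i \<noteq> j}. Theta (u(i := psi (g (u i)), j := f (u j))))"
    by (rule sum_negf)
  also have "\<dots> = - (\<Sum>i<d. \<Sum>j\<in>{j. j \<in> {..<d} \<and> i \<noteq> j}. Theta (u(i := g (u i), j := psi (f (u j)))))"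
    by (intro arg_cong[where f=uminus] sum.cong refl) (auto intro: cp)
  also have "(\<Sum>i<d. \<Sum>j\<in>{j. j \<in> {..<d} \<and> i \<noteq> j}. Theta (u(i := g (u i), j := psi (f (u j)))))
     = (\<Sum>j<d. \<Sum>i\<in>{i. i \<in> {..<d} \<and> i \<noteq> j}. Theta (u(i := g (u i), j := psi (f (u j)))))"
    by (rule sum.swap_restrict) auto
  also have "\<dots> = (\<Sum>j<d. \<Sum>i\<in>{i. i \<in> {..<d} \<and> j \<noteq> i}. Theta (u(j := psi (f (u j)), i := g (u i))))"
    by (intro sum.cong refl) (auto simp: fun_upd_twist)
  also have "- \<dots> = (\<Sum>j<d. - (\<Sum>i\<in>{i. i \<in> {..<d} \<and> j \<noteq> i}. Theta (u(j := psi (f (u j)), i := g (u i)))))"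
    by (rule sum_negf[symmetric])
  also have "\<dots> = (\<Sum>j<d. Theta (u(j := g (psi (f (u j))))))"
    by (rule sum.cong[OF refl], rule L1[OF g, symmetric]) simp
  finally show ?thesis by (simp add: fun_upd_def)
qed

theorem proposition2p15:
  fixes scale :: "'a::field \<Rightarrow> 'v::ab_group_add \<Rightarrow> 'v"
    and Basis :: "'v set"
    and d :: nat
    and Theta :: "(nat \<Rightarrow> 'v) \<Rightarrow> 'a"
    and psi :: "'v \<Rightarrow> 'v"
  assumes fdvs: "finite_dimensional_vector_space scale Basis"
    and char: "CHAR('a) = 0 \<or> CHAR('a) > d"
    and d3: "d \<ge> 3"
    and mult: "dlinear_form scale d Theta"
    and sym: "symmetric_form d Theta"
    and reg: "regular_form Theta"
    and psi: "psi \<in> Cent scale Theta"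
  shows "(\<forall>f\<in>LieAlg scale d Theta. \<forall>g\<in>LieAlg scale d Theta.
            psi_bracket psi f g \<in> LieAlg scale d Theta)
       \<and> (\<forall>f\<in>LieAlg scale d Theta. \<forall>g\<in>LieAlg scale d Theta. \<forall>h\<in>LieAlg scale d Theta. \<forall>a b.
            psi_bracket psi (end_add (end_scale scale a f) (end_scale scale b g)) h
              = end_add (end_scale scale a (psi_bracket psi f h)) (end_scale scale b (psi_bracket psi g h))
          \<and> psi_bracket psi h (end_add (end_scale scale a f) (end_scale scale b g))
              = end_add (end_scale scale a (psi_bracket psi h f)) (end_scale scale b (psi_bracket psi h g)))
       \<and> (\<forall>f\<in>LieAlg scale d Theta. psi_bracket psi f f = (\<lambda>x. 0))
       \<and> (\<forall>f\<in>LieAlg scale d Theta. \<forall>g\<in>LieAlg scale d Theta. \<forall>h\<in>LieAlg scale d Theta.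
            end_add (end_add (psi_bracket psi f (psi_bracket psi g h))
                             (psi_bracket psi g (psi_bracket psi h f)))
                    (psi_bracket psi h (psi_bracket psi f g)) = (\<lambda>x. 0))"
proof -
  have vs: "vector_space scale" using fdvs unfolding finite_dimensional_vector_space_def by blast
  interpret vector_space scale by (fact vs)
  have c: "\<And>u. Theta (u(0 := psi (u 0))) = Theta (u(1 := psi (u 1)))"
    and psil: "Vector_Spaces.linear scale scale psi" using psi unfolding Cent_def by auto
  have lin: "(\<forall>x y. h (x + y) = h x + h y) \<and> (\<forall>c x. h (scale c x) = scale c (h x))"
    if "Vector_Spaces.linear scale scale h" for h
    using that unfolding Vector_Spaces.linear_iff by blast
  have pa: "\<And>x y. psi (x + y) = psi x + psi y" and ps: "\<And>c x. psi (scale c x) = scale c (psi x)"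
    using lin[OF psil] by auto
  have pd: "\<And>x y. psi (x - y) = psi x - psi y" by (rule add_diff_hom) (use pa in auto)
  note LD = LieAlg_def
  have A: "\<forall>f\<in>LieAlg scale d Theta. \<forall>g\<in>LieAlg scale d Theta.
            psi_bracket psi f g \<in> LieAlg scale d Theta"
  proof (intro ballI)
    fix f g assume fL: "f \<in> LieAlg scale d Theta" and gL: "g \<in> LieAlg scale d Theta"
    have fa: "\<And>x y. f (x + y) = f x + f y" and fs: "\<And>c x. f (scale c x) = scale c (f x)"
      using lin fL unfolding LD by auto
    have ga: "\<And>x y. g (x + y) = g x + g y" and gs: "\<And>c x. g (scale c x) = scale c (g x)"
      using lin gL unfolding LD by auto
    have "Vector_Spaces.linear scale scale (psi_bracket psi f g)"
      unfolding Vector_Spaces.linear_iff psi_bracket_def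
      by (simp add: vs fa fs ga gs pa ps scale_right_diff_distrib)
    moreover have "\<forall>u. (\<Sum>i<d. Theta (u(i := psi_bracket psi f g (u i)))) = 0"
      by (intro allI closure[OF mult sym c]) (use fL gL in \<open>auto simp: LD fun_upd_def\<close>)
    ultimately show "psi_bracket psi f g \<in> LieAlg scale d Theta" unfolding LD by blast
  qed
  have B: "\<forall>f\<in>LieAlg scale d Theta. \<forall>g\<in>LieAlg scale d Theta. \<forall>h\<in>LieAlg scale d Theta. \<forall>a b.
            psi_bracket psi (end_add (end_scale scale a f) (end_scale scale b g)) h
              = end_add (end_scale scale a (psi_bracket psi f h)) (end_scale scale b (psi_bracket psi g h))
          \<and> psi_bracket psi h (end_add (end_scale scale a f) (end_scale scale b g))
              = end_add (end_scale scale a (psi_bracket psi h f)) (end_scale scale b (psi_bracket psi h g))"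
  proof (intro ballI allI)
    fix f g h a b
    assume fL: "f \<in> LieAlg scale d Theta" and gL: "g \<in> LieAlg scale d Theta" and hL: "h \<in> LieAlg scale d Theta"
    have fa: "\<And>x y. f (x + y) = f x + f y" and fs: "\<And>c x. f (scale c x) = scale c (f x)"
      using lin fL unfolding LD by auto
    have ga: "\<And>x y. g (x + y) = g x + g y" and gs: "\<And>c x. g (scale c x) = scale c (g x)"
      using lin gL unfolding LD by auto
    have ha: "\<And>x y. h (x + y) = h x + h y" and hs: "\<And>c x. h (scale c x) = scale c (h x)"
      using lin hL unfolding LD by auto
    show "psi_bracket psi (end_add (end_scale scale a f) (end_scale scale b g)) h
              = end_add (end_scale scale a (psi_bracket psi f h)) (end_scale scale b (psi_bracket psi g h))
          \<and> psi_bracket psi h (end_add (end_scale scale a f) (end_scale scale b g))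
              = end_add (end_scale scale a (psi_bracket psi h f)) (end_scale scale b (psi_bracket psi h g))"
      unfolding psi_bracket_def end_add_def end_scale_def fun_eq_iff
      by (simp add: fa fs ga gs ha hs pa ps scale_right_diff_distrib)
  qed
  have C: "\<forall>f\<in>LieAlg scale d Theta. psi_bracket psi f f = (\<lambda>x. 0)"
    unfolding psi_bracket_def by auto
  have D: "\<forall>f\<in>LieAlg scale d Theta. \<forall>g\<in>LieAlg scale d Theta. \<forall>h\<in>LieAlg scale d Theta.
            end_add (end_add (psi_bracket psi f (psi_bracket psi g h))
                             (psi_bracket psi g (psi_bracket psi h f)))
                    (psi_bracket psi h (psi_bracket psi f g)) = (\<lambda>x. 0)"
  proof (intro ballI)
    fix f g h
    assume fL: "f \<in> LieAlg scale d Theta" and gL: "g \<in> LieAlg scale d Theta" and hL: "h \<in> LieAlg scale d Theta"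
    have fd: "\<And>x y. f (x - y) = f x - f y" by (rule add_diff_hom) (use lin fL in \<open>auto simp: LD\<close>)
    have gd: "\<And>x y. g (x - y) = g x - g y" by (rule add_diff_hom) (use lin gL in \<open>auto simp: LD\<close>)
    have hd: "\<And>x y. h (x - y) = h x - h y" by (rule add_diff_hom) (use lin hL in \<open>auto simp: LD\<close>)
    show "end_add (end_add (psi_bracket psi f (psi_bracket psi g h))
                             (psi_bracket psi g (psi_bracket psi h f)))
                    (psi_bracket psi h (psi_bracket psi f g)) = (\<lambda>x. 0)"
      unfolding psi_bracket_def end_add_def fun_eq_iff
      by (simp add: fd gd hd pd algebra_simps)
  qed
  show ?thesis using A B C D by blast
qed

end
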